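(* Let $\mathbb{X}$ be a Cartesian left additive category. A $\mathsf{D}$-sequence $f_\bullet:A\to B$ is linear, i.e. $\mathsf{D}[f_\bullet]=\pi_1\cdot f_\bullet$, if and only if $f_\bullet=i_\bullet\cdot f_0$.
   Context: Composition in diagrammatic order. A Cartesian left additive category: finite products, hom-sets commutative monoids with $f(g+h)=fg+fh$, $f0=0$, projections additive. $\mathsf{P}(X)=X\times X$, $\mathsf{P}(f)=f\times f$. A pre-$\mathsf{D}$-sequence $f_\bullet:A\to B$ is $(f_n)_{n\ge0}$ with $f_n:\mathsf{P}^n(A)\to B$; $(h\cdot f_\bullet)_n=\mathsf{P}^n(h)f_n$, $(f_\bullet\cdot k)_n=f_nk$; $\mathsf{D}[f_\bullet]:\mathsf{P}(A)\to B$, $\mathsf{D}[f_\bullet]_n=f_{n+1}$; identity $i_\bullet$ with $i_0=1$, $i_n=\pi_1\cdots\pi_1$ ($n$ times). In the claim $\pi_1:\mathsf{P}(A)\to A$. A $\mathsf{D}$-sequence is a pre-$\mathsf{D}$-sequence such that for all $n$, with $X=\mathsf{P}^n(A)$: $\langle1,0\rangle\cdot\mathsf{D}^{n+1}[f_\bullet]=0_\bullet$; $(1\times(\pi_0+\pi_1))\cdot\mathsf{D}^{n+1}[f_\bullet]=(1\times\pi_0)\cdot\mathsf{D}^{n+1}[f_\bullet]+(1\times\pi_1)\cdot\mathsf{D}^{n+1}[f_\bullet]$; $\ell\cdot\mathsf{D}^{n+2}[f_\bullet]=\mathsf{D}^{n+1}[f_\bullet]$ with $\ell=\langle1,0\rangle\times\langle0,1\rangle$;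 $c\cdot\mathsf{D}^{n+2}[f_\bullet]=\mathsf{D}^{n+2}[f_\bullet]$ with $c=\langle\langle\pi_0\pi_0,\pi_1\pi_0\rangle,\langle\pi_0\pi_1,\pi_1\pi_1\rangle\rangle$ (sums and $0_\bullet$ pointwise). *)

theory Defs
  imports Main
begin

text \<open>A category given by its arrows (type 'm) and objects (type 'o), with
  composition in diagrammatic order (Comp f g = "f then g"), commutative-monoid
  enriched hom-sets (left additive structure), chosen binary products and a
  terminal object.\<close>

record ('o, 'm) cla =
  cdom  :: "'m \<Rightarrow> 'o"
  ccod  :: "'m \<Rightarrow> 'o"
  Comp  :: "'m \<Rightarrow> 'm \<Rightarrow> 'm"
  Idm   :: "'o \<Rightarrow> 'm"
  Add   :: "'m \<Rightarrow> 'm \<Rightarrow> 'm"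
  Zero  :: "'o \<Rightarrow> 'o \<Rightarrow> 'm"
  Prod  :: "'o \<Rightarrow> 'o \<Rightarrow> 'o"
  Pi0   :: "'o \<Rightarrow> 'o \<Rightarrow> 'm"
  Pi1   :: "'o \<Rightarrow> 'o \<Rightarrow> 'm"
  Pair  :: "'m \<Rightarrow> 'm \<Rightarrow> 'm"
  Term  :: "'o"
  Bang  :: "'o \<Rightarrow> 'm"

definition hom :: "('o, 'm, 'x) cla_scheme \<Rightarrow> 'm \<Rightarrow> 'o \<Rightarrow> 'o \<Rightarrow> bool" where
  "hom C f A B \<longleftrightarrow> cdom C f = A \<and> ccod C f = B"

definition cart_left_additive :: "('o, 'm, 'x) cla_scheme \<Rightarrow> bool" where
  "cart_left_additive C \<longleftrightarrow>
    \<comment> \<open>category\<close>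
    (\<forall>f g A B D. hom C f A B \<longrightarrow> hom C g B D \<longrightarrow> hom C (Comp C f g) A D) \<and>
    (\<forall>f g h A B D E. hom C f A B \<longrightarrow> hom C g B D \<longrightarrow> hom C h D E \<longrightarrow>
        Comp C (Comp C f g) h = Comp C f (Comp C g h)) \<and>
    (\<forall>A. hom C (Idm C A) A A) \<and>
    (\<forall>f A B. hom C f A B \<longrightarrow> Comp C (Idm C A) f = f \<and> Comp C f (Idm C B) = f) \<and>
    \<comment> \<open>hom-sets are commutative monoids\<close>
    (\<forall>f g A B. hom C f A B \<longrightarrow> hom C g A B \<longrightarrow> hom C (Add C f g) A B) \<and>
    (\<forall>f g h A B. hom C f A B \<longrightarrow> hom C g A B \<longrightarrow> hom C h A B \<longrightarrow>
        Add C (Add C f g) h = Add C f (Add C g h)) \<and>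
    (\<forall>f g A B. hom C f A B \<longrightarrow> hom C g A B \<longrightarrow> Add C f g = Add C g f) \<and>
    (\<forall>A B. hom C (Zero C A B) A B) \<and>
    (\<forall>f A B. hom C f A B \<longrightarrow> Add C (Zero C A B) f = f) \<and>
    \<comment> \<open>left additivity: f(g+h) = fg + fh and f0 = 0\<close>
    (\<forall>f g h A B D. hom C f A B \<longrightarrow> hom C g B D \<longrightarrow> hom C h B D \<longrightarrow>
        Comp C f (Add C g h) = Add C (Comp C f g) (Comp C f h)) \<and>
    (\<forall>f A B D. hom C f A B \<longrightarrow> Comp C f (Zero C B D) = Zero C A D) \<and>
    \<comment> \<open>binary products\<close>
    (\<forall>A B. hom C (Pi0 C A B) (Prod C A B) A \<and> hom C (Pi1 C A B) (Prod C A B) B) \<and>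
    (\<forall>f g A B D. hom C f D A \<longrightarrow> hom C g D B \<longrightarrow>
        hom C (Pair C f g) D (Prod C A B) \<and>
        Comp C (Pair C f g) (Pi0 C A B) = f \<and> Comp C (Pair C f g) (Pi1 C A B) = g) \<and>
    (\<forall>h A B D. hom C h D (Prod C A B) \<longrightarrow>
        h = Pair C (Comp C h (Pi0 C A B)) (Comp C h (Pi1 C A B))) \<and>
    \<comment> \<open>terminal object\<close>
    (\<forall>A. hom C (Bang C A) A (Term C)) \<and>
    (\<forall>h A. hom C h A (Term C) \<longrightarrow> h = Bang C A) \<and>
    \<comment> \<open>projections are additive\<close>
    (\<forall>f g A B D. hom C f D (Prod C A B) \<longrightarrow> hom C g D (Prod C A B) \<longrightarrow>
        Comp C (Add C f g) (Pi0 C A B) = Add C (Comp C f (Pi0 C A B)) (Comp C g (Pi0 C A B)) \<and>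
        Comp C (Add C f g) (Pi1 C A B) = Add C (Comp C f (Pi1 C A B)) (Comp C g (Pi1 C A B))) \<and>
    (\<forall>A B D. Comp C (Zero C D (Prod C A B)) (Pi0 C A B) = Zero C D A \<and>
             Comp C (Zero C D (Prod C A B)) (Pi1 C A B) = Zero C D B)"

definition times :: "('o, 'm, 'x) cla_scheme \<Rightarrow> 'm \<Rightarrow> 'm \<Rightarrow> 'm" where
  "times C f g = Pair C (Comp C (Pi0 C (cdom C f) (cdom C g)) f)
                        (Comp C (Pi1 C (cdom C f) (cdom C g)) g)"

definition PO :: "('o, 'm, 'x) cla_scheme \<Rightarrow> 'o \<Rightarrow> 'o" where
  "PO C X = Prod C X X"

definition PM :: "('o, 'm, 'x) cla_scheme \<Rightarrow> 'm \<Rightarrow> 'm" where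
  "PM C f = times C f f"

definition Pn_obj :: "('o, 'm, 'x) cla_scheme \<Rightarrow> nat \<Rightarrow> 'o \<Rightarrow> 'o" where
  "Pn_obj C n X = (PO C ^^ n) X"

definition Pn_mor :: "('o, 'm, 'x) cla_scheme \<Rightarrow> nat \<Rightarrow> 'm \<Rightarrow> 'm" where
  "Pn_mor C n f = (PM C ^^ n) f"

definition pre_D_seq :: "('o, 'm, 'x) cla_scheme \<Rightarrow> 'o \<Rightarrow> 'o \<Rightarrow> (nat \<Rightarrow> 'm) \<Rightarrow> bool" where
  "pre_D_seq C A B f \<longleftrightarrow> (\<forall>n. hom C (f n) (Pn_obj C n A) B)"

definition seq_pre :: "('o, 'm, 'x) cla_scheme \<Rightarrow> 'm \<Rightarrow> (nat \<Rightarrow> 'm) \<Rightarrow> nat \<Rightarrow> 'm" where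
  "seq_pre C h f = (\<lambda>n. Comp C (Pn_mor C n h) (f n))"

definition seq_post :: "('o, 'm, 'x) cla_scheme \<Rightarrow> (nat \<Rightarrow> 'm) \<Rightarrow> 'm \<Rightarrow> nat \<Rightarrow> 'm" where
  "seq_post C f k = (\<lambda>n. Comp C (f n) k)"

definition seq_D :: "(nat \<Rightarrow> 'm) \<Rightarrow> nat \<Rightarrow> 'm" where
  "seq_D f = (\<lambda>n. f (Suc n))"

definition seq_add :: "('o, 'm, 'x) cla_scheme \<Rightarrow> (nat \<Rightarrow> 'm) \<Rightarrow> (nat \<Rightarrow> 'm) \<Rightarrow> nat \<Rightarrow> 'm" where
  "seq_add C f g = (\<lambda>n. Add C (f n) (g n))"

definition seq_zero :: "('o, 'm, 'x) cla_scheme \<Rightarrow> 'o \<Rightarrow> 'o \<Rightarrow> nat \<Rightarrow> 'm" where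
  "seq_zero C A B = (\<lambda>n. Zero C (Pn_obj C n A) B)"

primrec id_seq :: "('o, 'm, 'x) cla_scheme \<Rightarrow> 'o \<Rightarrow> nat \<Rightarrow> 'm" where
  "id_seq C A 0 = Idm C A"
| "id_seq C A (Suc n) = Comp C (Pi1 C (Pn_obj C n A) (Pn_obj C n A)) (id_seq C A n)"

definition D_seq :: "('o, 'm, 'x) cla_scheme \<Rightarrow> 'o \<Rightarrow> 'o \<Rightarrow> (nat \<Rightarrow> 'm) \<Rightarrow> bool" where
  "D_seq C A B f \<longleftrightarrow> pre_D_seq C A B f \<and>
    (\<forall>n. let X = Pn_obj C n A; Y = PO C X;
             p0 = Pi0 C X X; p1 = Pi1 C X X; q0 = Pi0 C Y Y; q1 = Pi1 C Y Y;
             D1 = (seq_D ^^ Suc n) f; D2 = (seq_D ^^ Suc (Suc n)) f;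
             e10 = Pair C (Idm C X) (Zero C X X); e01 = Pair C (Zero C X X) (Idm C X)
         in seq_pre C e10 D1 = seq_zero C X B
          \<and> seq_pre C (times C (Idm C X) (Add C p0 p1)) D1
              = seq_add C (seq_pre C (times C (Idm C X) p0) D1)
                          (seq_pre C (times C (Idm C X) p1) D1)
          \<and> seq_pre C (times C e10 e01) D2 = D1
          \<and> seq_pre C (Pair C (Pair C (Comp C q0 p0) (Comp C q1 p0))
                               (Pair C (Comp C q0 p1) (Comp C q1 p1))) D2 = D2)"

end

theory Submission
  imports Defs
begin

lemma ax_comp: assumes c: "cart_left_additive C" shows "hom C f A B \<Longrightarrow> hom C g B D \<Longrightarrow> hom C (Comp C f g) A D"
proof -
  have "\<forall>f g A B D. hom C f A B \<longrightarrow> hom C g B D \<longrightarrow> hom C (Comp C f g) A D"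
    using c unfolding cart_left_additive_def by (elim conjE) assumption
  then show "hom C f A B \<Longrightarrow> hom C g B D \<Longrightarrow> hom C (Comp C f g) A D" by blast
qed
lemma ax_assoc: assumes c: "cart_left_additive C" shows "hom C f A B \<Longrightarrow> hom C g B D \<Longrightarrow> hom C h D E \<Longrightarrow>
   Comp C (Comp C f g) h = Comp C f (Comp C g h)"
proof -
  have "\<forall>f g h A B D E. hom C f A B \<longrightarrow> hom C g B D \<longrightarrow> hom C h D E \<longrightarrow>
        Comp C (Comp C f g) h = Comp C f (Comp C g h)"
    using c unfolding cart_left_additive_def by (elim conjE) assumption
  then show "hom C f A B \<Longrightarrow> hom C g B D \<Longrightarrow> hom C h D E \<Longrightarrow>
   Comp C (Comp C f g) h = Comp C f (Comp C g h)" by blast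
qed
lemma ax_id: assumes c: "cart_left_additive C" shows "hom C (Idm C A) A A"
proof -
  have "\<forall>A. hom C (Idm C A) A A"
    using c unfolding cart_left_additive_def by (elim conjE) assumption
  then show ?thesis by blast
qed
lemma ax_idlr: assumes c: "cart_left_additive C" shows "hom C f A B \<Longrightarrow> Comp C (Idm C A) f = f \<and> Comp C f (Idm C B) = f"
proof -
  have "\<forall>f A B. hom C f A B \<longrightarrow> Comp C (Idm C A) f = f \<and> Comp C f (Idm C B) = f"
    using c unfolding cart_left_additive_def by (elim conjE) assumption
  then show "hom C f A B \<Longrightarrow> Comp C (Idm C A) f = f \<and> Comp C f (Idm C B) = f" by blast
qed
lemma ax_idl: "cart_left_additive C \<Longrightarrow> hom C f A B \<Longrightarrow> Comp C (Idm C A) f = f"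
  using ax_idlr by metis
lemma ax_idr: "cart_left_additive C \<Longrightarrow> hom C f A B \<Longrightarrow> Comp C f (Idm C B) = f"
  using ax_idlr by metis
lemma ax_pi: assumes c: "cart_left_additive C" shows "hom C (Pi0 C A B) (Prod C A B) A \<and> hom C (Pi1 C A B) (Prod C A B) B"
proof -
  have "\<forall>A B. hom C (Pi0 C A B) (Prod C A B) A \<and> hom C (Pi1 C A B) (Prod C A B) B"
    using c unfolding cart_left_additive_def by (elim conjE) assumption
  then show ?thesis by blast
qed
lemma ax_pair: assumes c: "cart_left_additive C" shows "hom C f D A \<Longrightarrow> hom C g D B \<Longrightarrow>
        hom C (Pair C f g) D (Prod C A B) \<and>
        Comp C (Pair C f g) (Pi0 C A B) = f \<and> Comp C (Pair C f g) (Pi1 C A B) = g"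
proof -
  have "\<forall>f g A B D. hom C f D A \<longrightarrow> hom C g D B \<longrightarrow>
        hom C (Pair C f g) D (Prod C A B) \<and>
        Comp C (Pair C f g) (Pi0 C A B) = f \<and> Comp C (Pair C f g) (Pi1 C A B) = g"
    using c unfolding cart_left_additive_def by (elim conjE) assumption
  then show "hom C f D A \<Longrightarrow> hom C g D B \<Longrightarrow>
        hom C (Pair C f g) D (Prod C A B) \<and>
        Comp C (Pair C f g) (Pi0 C A B) = f \<and> Comp C (Pair C f g) (Pi1 C A B) = g" by blast
qed

lemma PM_hom:
  assumes c: "cart_left_additive C" and h: "hom C h X Y"
  shows "hom C (PM C h) (PO C X) (PO C Y) \<and> Comp C (PM C h) (Pi1 C Y Y) = Comp C (Pi1 C X X) h"
proof -
  have d: "cdom C h = X" using h by (simp add: hom_def)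
  have a: "hom C (Comp C (Pi0 C X X) h) (PO C X) Y" "hom C (Comp C (Pi1 C X X) h) (PO C X) Y"
    using ax_comp[OF c] ax_pi[OF c] h unfolding PO_def by blast+
  show ?thesis using ax_pair[OF c a] unfolding PM_def times_def d PO_def by simp
qed

lemma Pn_obj_Suc: "Pn_obj C (Suc n) X = PO C (Pn_obj C n X)"
  by (simp add: Pn_obj_def)
lemma Pn_obj_Suc': "Pn_obj C (Suc n) X = Pn_obj C n (PO C X)"
  by (simp add: Pn_obj_def funpow_Suc_right del: funpow.simps)
lemma Pn_mor_Suc: "Pn_mor C (Suc n) h = PM C (Pn_mor C n h)"
  by (simp add: Pn_mor_def)

lemma Pn_mor_hom: "cart_left_additive C \<Longrightarrow> hom C h X Y \<Longrightarrow> hom C (Pn_mor C n h) (Pn_obj C n X) (Pn_obj C n Y)"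
  by (induction n) (auto simp: Pn_mor_Suc Pn_obj_Suc PM_hom, simp_all add: Pn_mor_def Pn_obj_def)

lemma id_seq_hom: "cart_left_additive C \<Longrightarrow> hom C (id_seq C X n) (Pn_obj C n X) X"
proof (induction n)
  case 0 then show ?case using ax_id by (simp add: Pn_obj_def)
next
  case (Suc n)
  have "hom C (Pi1 C (Pn_obj C n X) (Pn_obj C n X)) (Pn_obj C (Suc n) X) (Pn_obj C n X)"
    using ax_pi[OF Suc.prems] by (simp add: Pn_obj_Suc PO_def)
  then show ?case using ax_comp[OF Suc.prems] Suc by simp
qed

lemma nat_i:
  assumes c: "cart_left_additive C" and h: "hom C h X Y"
  shows "Comp C (Pn_mor C n h) (id_seq C Y n) = Comp C (id_seq C X n) h"
proof (induction n)
  case 0 then show ?case using ax_idl[OF c h] ax_idr[OF c h] by (simp add: Pn_mor_def)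
next
  case (Suc n)
  let ?X = "Pn_obj C n X" and ?Y = "Pn_obj C n Y" and ?h = "Pn_mor C n h"
  have hh: "hom C ?h ?X ?Y" using Pn_mor_hom[OF c h] .
  have P: "hom C (PM C ?h) (PO C ?X) (PO C ?Y)" "Comp C (PM C ?h) (Pi1 C ?Y ?Y) = Comp C (Pi1 C ?X ?X) ?h"
    using PM_hom[OF c hh] by auto
  have p1Y: "hom C (Pi1 C ?Y ?Y) (PO C ?Y) ?Y" and p1X: "hom C (Pi1 C ?X ?X) (PO C ?X) ?X"
    using ax_pi[OF c] unfolding PO_def by blast+
  have iY: "hom C (id_seq C Y n) ?Y Y" and iX: "hom C (id_seq C X n) ?X X" using id_seq_hom[OF c] by auto
  have "Comp C (Pn_mor C (Suc n) h) (id_seq C Y (Suc n))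
      = Comp C (PM C ?h) (Comp C (Pi1 C ?Y ?Y) (id_seq C Y n))" by (simp add: Pn_mor_Suc)
  also have "\<dots> = Comp C (Comp C (PM C ?h) (Pi1 C ?Y ?Y)) (id_seq C Y n)"
    using ax_assoc[OF c P(1) p1Y iY] by simp
  also have "\<dots> = Comp C (Pi1 C ?X ?X) (Comp C ?h (id_seq C Y n))"
    using P(2) ax_assoc[OF c p1X hh iY] by simp
  also have "\<dots> = Comp C (Pi1 C ?X ?X) (Comp C (id_seq C X n) h)" using Suc by simp
  also have "\<dots> = Comp C (id_seq C X (Suc n)) h"
    using ax_assoc[OF c p1X iX h] by simp
  finally show ?case .
qed

lemma id_seq_Suc':
  assumes c: "cart_left_additive C"
  shows "id_seq C A (Suc n) = Comp C (id_seq C (PO C A) n) (Pi1 C A A)"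
proof (induction n)
  case 0
  have "hom C (Pi1 C A A) (PO C A) A" using ax_pi[OF c] by (simp add: PO_def)
  then show ?case using ax_idl[OF c] ax_idr[OF c] by (simp add: Pn_obj_def PO_def)
next
  case (Suc n)
  let ?Z = "Pn_obj C n (PO C A)"
  have e: "Pn_obj C (Suc n) A = ?Z" by (rule Pn_obj_Suc')
  have p1: "hom C (Pi1 C ?Z ?Z) (PO C ?Z) ?Z" using ax_pi[OF c] by (simp add: PO_def)
  have iZ: "hom C (id_seq C (PO C A) n) ?Z (PO C A)" using id_seq_hom[OF c] .
  have pA: "hom C (Pi1 C A A) (PO C A) A" using ax_pi[OF c] by (simp add: PO_def)
  show ?case using Suc e ax_assoc[OF c p1 iZ pA] by simp
qed

lemma key:
  assumes c: "cart_left_additive C"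
  shows "Comp C (Pn_mor C n (Pi1 C A A)) (id_seq C A n) = id_seq C A (Suc n)"
proof -
  have pA: "hom C (Pi1 C A A) (PO C A) A" using ax_pi[OF c] by (simp add: PO_def)
  show ?thesis using nat_i[OF c pA] id_seq_Suc'[OF c] by simp
qed

lemma key2:
  assumes c: "cart_left_additive C" and f0: "hom C f0 A B"
  shows "Comp C (Pn_mor C n (Pi1 C A A)) (Comp C (id_seq C A n) f0) = Comp C (id_seq C A (Suc n)) f0"
proof -
  have pA: "hom C (Pi1 C A A) (PO C A) A" using ax_pi[OF c] by (simp add: PO_def)
  have e: "Pn_obj C n (PO C A) = Pn_obj C (Suc n) A" by (simp add: Pn_obj_Suc')
  show ?thesis using ax_assoc[OF c Pn_mor_hom[OF c pA] id_seq_hom[OF c] f0] key[OF c] by simp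
qed

theorem lemma4p23:
  fixes C :: "('o, 'm, 'x) cla_scheme" and A B :: 'o and f :: "nat \<Rightarrow> 'm"
  assumes "cart_left_additive C"
    and "D_seq C A B f"
  shows "seq_D f = seq_pre C (Pi1 C A A) f \<longleftrightarrow> f = seq_post C (id_seq C A) (f 0)"
proof -
  note c = assms(1)
  obtain g where g: "g = f 0" by blast
  have f0: "hom C g A B" using assms(2) g unfolding D_seq_def pre_D_seq_def
    by (metis Pn_obj_def funpow_0)
  show ?thesis unfolding g[symmetric]
  proof
    assume L: "seq_D f = seq_pre C (Pi1 C A A) f"
    have H: "f n = Comp C (id_seq C A n) g" for n
    proof (induction n)
      case 0 then show ?case using ax_idl[OF c f0] g by simp
    next
      case (Suc n)
      have "f (Suc n) = Comp C (Pn_mor C n (Pi1 C A A)) (f n)"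
        using fun_cong[OF L, of n] by (simp add: seq_D_def seq_pre_def)
      then show ?case using Suc key2[OF c f0] by simp
    qed
    show "f = seq_post C (id_seq C A) g" unfolding seq_post_def by (rule ext) (rule H)
  next
    assume R: "f = seq_post C (id_seq C A) g"
    have H: "f n = Comp C (id_seq C A n) g" for n using fun_cong[OF R, of n] by (simp add: seq_post_def)
    show "seq_D f = seq_pre C (Pi1 C A A) f"
      unfolding seq_D_def seq_pre_def
    proof (rule ext)
      fix n
      show "f (Suc n) = Comp C (Pn_mor C n (Pi1 C A A)) (f n)"
        unfolding H using key2[OF c f0] by simp
    qed
  qed
qed

end
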